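(* Let $\{(x^k,y^k)\}$ be generated by the LSAAL algorithm described in the context, under the standing bounds (D2) and (D3). Then for $k=1,2,\dots$, $$\|x^{k+1}-x^k\|\le\sigma\Big\{[\kappa_f+\nu_g\kappa_g\sigma]+\kappa_g\|y^k\|\Big\}.$$
   Context: $\mathcal{Y}$ is a finite-dimensional Hilbert space, $\mathcal{K}\subset\mathcal{Y}$ a closed convex cone, $\mathcal{K}^\circ=\{v:\langle v,w\rangle\le0\ \forall w\in\mathcal{K}\}$ its polar cone, $\Pi_{\mathcal{K}^\circ}$ the metric projection onto $\mathcal{K}^\circ$. $X\subset\mathbb{R}^n$ is a nonempty convex compact set contained in an open convex set $\mathcal{O}$. $\xi$ is a random vector supported on $\Xi\subseteq\mathbb{R}^q$; $F:\mathcal{O}\times\Xi\to\mathbb{R}$, $G:\mathcal{O}\times\Xi\to\mathcal{Y}$ are, for every $\xi$, smooth in $x$, with gradient $\nabla_xF(x,\xi)$ and derivative $\mathrm{D}_xG(x,\xi)$. Samples $\xi_1,\xi_2,\dots$ of $\xi$ are given. (D2) There is $\nu_g>0$ with $\|G(x,\xi)\|\le\nu_g$ for all $x\in\mathcal{O}$ and all $\xi$. (D3) There are $\kappa_f,\kappa_g>0$ with $\|\nabla_xF(x,\xi)\|\le\kappa_f$ and $\|\mathrm{D}_xG(x,\xi)\|\le\kappa_g$ (operator norm) for all $x\in\mathcal{O}$ and all $\xi$. LSAAL algorithm: choose $x^1\in X$, $y^1=0$, $\sigma>0$. For $k=1,2,\dots$: $l_f^k(x)=F(x^k,\xi_k)+\langle\nabla_xF(x^k,\xi_k),x-x^k\rangle$,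 $l_g^k(x)=G(x^k,\xi_k)+\mathrm{D}_xG(x^k,\xi_k)(x-x^k)$, $l_\sigma^k(x,y)=l_f^k(x)+\frac{1}{2\sigma}[\|\Pi_{\mathcal{K}^\circ}(y+\sigma l_g^k(x))\|^2-\|y\|^2]$, $x^{k+1}=\mathrm{argmin}_{x\in X}\{l_\sigma^k(x,y^k)+\frac{1}{2\sigma}\|x-x^k\|^2\}$, $y^{k+1}=\Pi_{\mathcal{K}^\circ}(y^k+\sigma l_g^k(x^{k+1}))$. *)

theory Defs
  imports "HOL-Analysis.Analysis"
begin

definition polar_cone :: "'a::real_inner set \<Rightarrow> 'a set" where
  "polar_cone K = {v. \<forall>w\<in>K. inner v w \<le> 0}"

definition proj_polar :: "'a::euclidean_space set \<Rightarrow> 'a \<Rightarrow> 'a" where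
  "proj_polar K v = closest_point (polar_cone K) v"

definition lin_f :: "('x::euclidean_space \<Rightarrow> 'q \<Rightarrow> real) \<Rightarrow> ('x \<Rightarrow> 'q \<Rightarrow> 'x)
    \<Rightarrow> 'x \<Rightarrow> 'q \<Rightarrow> 'x \<Rightarrow> real" where
  "lin_f F gradF xk xik z = F xk xik + inner (gradF xk xik) (z - xk)"

definition lin_g :: "('x::euclidean_space \<Rightarrow> 'q \<Rightarrow> 'y::euclidean_space) \<Rightarrow> ('x \<Rightarrow> 'q \<Rightarrow> ('x \<Rightarrow>\<^sub>L 'y))
    \<Rightarrow> 'x \<Rightarrow> 'q \<Rightarrow> 'x \<Rightarrow> 'y" where
  "lin_g G DG xk xik z = G xk xik + blinfun_apply (DG xk xik) (z - xk)"

definition lin_AL :: "'y::euclidean_space set \<Rightarrow> real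
    \<Rightarrow> ('x::euclidean_space \<Rightarrow> 'q \<Rightarrow> real) \<Rightarrow> ('x \<Rightarrow> 'q \<Rightarrow> 'x)
    \<Rightarrow> ('x \<Rightarrow> 'q \<Rightarrow> 'y) \<Rightarrow> ('x \<Rightarrow> 'q \<Rightarrow> ('x \<Rightarrow>\<^sub>L 'y))
    \<Rightarrow> 'x \<Rightarrow> 'q \<Rightarrow> 'x \<Rightarrow> 'y \<Rightarrow> real" where
  "lin_AL K \<sigma> F gradF G DG xk xik z y =
     lin_f F gradF xk xik z
     + (1 / (2 * \<sigma>)) * ((norm (proj_polar K (y + \<sigma> *\<^sub>R lin_g G DG xk xik z)))\<^sup>2 - (norm y)\<^sup>2)"

end

theory Submission
  imports Defs
begin

lemma polar_closed: "closed (polar_cone K)"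
proof -
  have "polar_cone K = (\<Inter>w\<in>K. {v. inner w v \<le> 0})" unfolding polar_cone_def by (auto simp: inner_commute)
  thus ?thesis by (simp add: closed_INT closed_halfspace_le)
qed

lemma polar_convex: "convex (polar_cone K)"
proof -
  have "polar_cone K = (\<Inter>w\<in>K. {v. inner w v \<le> 0})" unfolding polar_cone_def by (auto simp: inner_commute)
  thus ?thesis by (simp add: convex_INT convex_halfspace_le)
qed

lemma polar_zero: "0 \<in> polar_cone K" unfolding polar_cone_def by auto

lemma polar_scale: "v \<in> polar_cone K \<Longrightarrow> s \<ge> 0 \<Longrightarrow> s *\<^sub>R v \<in> polar_cone K"
  unfolding polar_cone_def by (auto intro: mult_nonneg_nonpos)

lemma proj_in: "proj_polar K w \<in> polar_cone K"
  unfolding proj_polar_def using closest_point_in_set[OF polar_closed] polar_zero by blast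

lemma proj_dot: "c \<in> polar_cone K \<Longrightarrow> inner (w - proj_polar K w) (c - proj_polar K w) \<le> 0"
  unfolding proj_polar_def by (rule closest_point_dot[OF polar_convex polar_closed])

lemma proj_orth: "inner (w - proj_polar K w) (proj_polar K w) = 0"
proof -
  let ?p = "proj_polar K w"
  have "inner (w - ?p) (0 - ?p) \<le> 0" using proj_dot polar_zero by blast
  moreover have "inner (w - ?p) (2 *\<^sub>R ?p - ?p) \<le> 0" using proj_dot[OF polar_scale[OF proj_in, of 2]] by simp
  ultimately show ?thesis by (simp add: inner_diff_right algebra_simps)
qed

lemma proj_neg: "c \<in> polar_cone K \<Longrightarrow> inner (w - proj_polar K w) c \<le> 0"
  using proj_dot[of c K w] proj_orth[of w K] by (simp add: inner_diff_right)

lemma proj_norm_le: "norm (proj_polar K w) \<le> norm w"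
proof -
  let ?p = "proj_polar K w"
  have e: "inner ?p ?p = inner ?p w" using proj_orth[of w K]
    by (simp add: inner_diff_left inner_diff_right inner_commute)
  have "norm ?p * norm ?p = inner ?p w" using e power2_norm_eq_inner[of ?p] by (simp add: power2_eq_square)
  also have "\<dots> \<le> norm ?p * norm w" by (rule norm_cauchy_schwarz)
  finally have "norm ?p * norm ?p \<le> norm ?p * norm w" .
  thus ?thesis by (cases "norm ?p = 0") (auto simp: mult_le_cancel_left)
qed

lemma proj_subgrad:
  "(norm (proj_polar K w))\<^sup>2 + 2 * inner (proj_polar K w) (w' - w) \<le> (norm (proj_polar K w'))\<^sup>2"
proof -
  let ?p = "proj_polar K w" and ?q = "proj_polar K w'"
  have a: "inner ?p w = (norm ?p)\<^sup>2" using proj_orth[of w K]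
    by (simp add: inner_diff_left inner_diff_right inner_commute power2_norm_eq_inner)
  have b: "inner (w' - ?q) ?p \<le> 0" using proj_neg[OF proj_in] .
  have c: "0 \<le> (norm (?q - ?p))\<^sup>2" by simp
  have "(norm (?q - ?p))\<^sup>2 = (norm ?q)\<^sup>2 - 2 * inner ?p ?q + (norm ?p)\<^sup>2"
    by (simp add: power2_norm_eq_inner inner_diff_left inner_diff_right inner_commute)
  moreover have "inner ?p (w' - w) = inner ?p w' - (norm ?p)\<^sup>2" using a by (simp add: inner_diff_right)
  moreover have "inner ?p w' \<le> inner ?p ?q" using b by (simp add: inner_diff_left inner_diff_right inner_commute)
  ultimately show ?thesis using c by linarith
qed

lemma proj_convex:
  assumes "0 \<le> t" "t \<le> 1"
  shows "(norm (proj_polar K ((1-t) *\<^sub>R u + t *\<^sub>R v)))\<^sup>2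
     \<le> (1-t) * (norm (proj_polar K u))\<^sup>2 + t * (norm (proj_polar K v))\<^sup>2"
proof -
  let ?m = "(1-t) *\<^sub>R u + t *\<^sub>R v"
  let ?p = "proj_polar K ?m"
  have 1: "(norm ?p)\<^sup>2 + 2 * inner ?p (u - ?m) \<le> (norm (proj_polar K u))\<^sup>2" by (rule proj_subgrad)
  have 2: "(norm ?p)\<^sup>2 + 2 * inner ?p (v - ?m) \<le> (norm (proj_polar K v))\<^sup>2" by (rule proj_subgrad)
  have e: "(1-t) * inner ?p (u - ?m) + t * inner ?p (v - ?m) = 0"
  proof -
    have "(1-t) *\<^sub>R (u - ?m) + t *\<^sub>R (v - ?m) = 0" by (simp add: algebra_simps)
    hence "inner ?p ((1-t) *\<^sub>R (u - ?m) + t *\<^sub>R (v - ?m)) = 0" by simp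
    thus ?thesis by (simp add: inner_add_right)
  qed
  have "(1-t) * ((norm ?p)\<^sup>2 + 2 * inner ?p (u - ?m)) \<le> (1-t) * (norm (proj_polar K u))\<^sup>2"
    using 1 assms by (intro mult_left_mono) auto
  moreover have "t * ((norm ?p)\<^sup>2 + 2 * inner ?p (v - ?m)) \<le> t * (norm (proj_polar K v))\<^sup>2"
    using 2 assms by (intro mult_left_mono) auto
  ultimately show ?thesis using e by (simp add: algebra_simps)
qed



theorem corollary3p1:
  fixes K :: "'y::euclidean_space set"
    and X U :: "'x::euclidean_space set"
    and Xi :: "'q::euclidean_space set"
    and F :: "'x \<Rightarrow> 'q \<Rightarrow> real" and gradF :: "'x \<Rightarrow> 'q \<Rightarrow> 'x"
    and G :: "'x \<Rightarrow> 'q \<Rightarrow> 'y" and DG :: "'x \<Rightarrow> 'q \<Rightarrow> ('x \<Rightarrow>\<^sub>L 'y)"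
    and xi :: "nat \<Rightarrow> 'q"
    and x :: "nat \<Rightarrow> 'x" and y :: "nat \<Rightarrow> 'y"
    and \<sigma> \<nu>g \<kappa>f \<kappa>g :: real
  assumes K_cone: "closed K" "convex_cone K"
    and X_ne: "X \<noteq> {}" and X_cvx: "convex X" and X_cpt: "compact X"
    and O_open: "open U" and O_cvx: "convex U" and XO: "X \<subseteq> U"
    and F_deriv: "\<And>\<xi> z. \<xi> \<in> Xi \<Longrightarrow> z \<in> U \<Longrightarrow>
         ((\<lambda>u. F u \<xi>) has_derivative (\<lambda>h. inner (gradF z \<xi>) h)) (at z)"
    and G_deriv: "\<And>\<xi> z. \<xi> \<in> Xi \<Longrightarrow> z \<in> U \<Longrightarrow>
         ((\<lambda>u. G u \<xi>) has_derivative blinfun_apply (DG z \<xi>)) (at z)"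
    and gradF_cont: "\<And>\<xi>. \<xi> \<in> Xi \<Longrightarrow> continuous_on U (\<lambda>u. gradF u \<xi>)"
    and DG_cont: "\<And>\<xi>. \<xi> \<in> Xi \<Longrightarrow> continuous_on U (\<lambda>u. DG u \<xi>)"
    and samples: "\<And>k. k \<ge> 1 \<Longrightarrow> xi k \<in> Xi"
    and D2: "\<nu>g > 0" "\<And>z \<xi>. z \<in> U \<Longrightarrow> \<xi> \<in> Xi \<Longrightarrow> norm (G z \<xi>) \<le> \<nu>g"
    and D3: "\<kappa>f > 0" "\<kappa>g > 0"
      "\<And>z \<xi>. z \<in> U \<Longrightarrow> \<xi> \<in> Xi \<Longrightarrow> norm (gradF z \<xi>) \<le> \<kappa>f"
      "\<And>z \<xi>. z \<in> U \<Longrightarrow> \<xi> \<in> Xi \<Longrightarrow> norm (DG z \<xi>) \<le> \<kappa>g"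
    and sigma_pos: "\<sigma> > 0"
    and x1: "x 1 \<in> X" and y1: "y 1 = 0"
    and x_step: "\<And>k. k \<ge> 1 \<Longrightarrow> x (Suc k) \<in> X \<and>
        (\<forall>z\<in>X. lin_AL K \<sigma> F gradF G DG (x k) (xi k) (x (Suc k)) (y k)
                    + (1 / (2 * \<sigma>)) * (norm (x (Suc k) - x k))\<^sup>2
                 \<le> lin_AL K \<sigma> F gradF G DG (x k) (xi k) z (y k)
                    + (1 / (2 * \<sigma>)) * (norm (z - x k))\<^sup>2)"
    and y_step: "\<And>k. k \<ge> 1 \<Longrightarrow>
        y (Suc k) = proj_polar K (y k + \<sigma> *\<^sub>R lin_g G DG (x k) (xi k) (x (Suc k)))"
  shows "\<forall>k\<ge>1. norm (x (Suc k) - x k) \<le> \<sigma> * ((\<kappa>f + \<nu>g * \<kappa>g * \<sigma>) + \<kappa>g * norm (y k))"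
  proof (intro allI impI)
  fix k :: nat assume k: "k \<ge> 1"
  have xX: "x j \<in> X" if "j \<ge> 1" for j
    using that
  proof (induction j rule: dec_induct)
    case base show ?case using x1 by simp
  next
    case (step n) thus ?case using x_step[of n] by simp
  qed
  define a where "a = x k"
  define b where "b = x (Suc k)"
  define \<xi> where "\<xi> = xi k"
  define d where "d = b - a"
  define yk where "yk = y k"
  define c where "c = 1 / (2 * \<sigma>)"
  define M where "M = \<kappa>f + \<nu>g * \<kappa>g * \<sigma> + \<kappa>g * norm yk"
  define Phi where "Phi z = lin_AL K \<sigma> F gradF G DG a \<xi> z yk" for z
  define Wf where "Wf z = yk + \<sigma> *\<^sub>R lin_g G DG a \<xi> z" for z
  define q where "q w = (norm (proj_polar K w))\<^sup>2" for w
  have aX: "a \<in> X" using xX k a_def by simp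
  have bX: "b \<in> X" using x_step[OF k] b_def by simp
  have aU: "a \<in> U" using aX XO by auto
  have xiXi: "\<xi> \<in> Xi" using samples k \<xi>_def by simp
  have cpos: "c > 0" using sigma_pos c_def by simp
  have Mpos: "M \<ge> 0" using D2 D3 sigma_pos M_def by simp
  have min: "Phi b + c * (norm d)\<^sup>2 \<le> Phi z + c * (norm (z - a))\<^sup>2" if "z \<in> X" for z
    using x_step[OF k] that unfolding Phi_def c_def d_def a_def b_def \<xi>_def yk_def by blast
  have Phi_eq: "Phi z = lin_f F gradF a \<xi> z + c * (q (Wf z) - (norm yk)\<^sup>2)" for z
    by (simp add: Phi_def lin_AL_def Wf_def c_def q_def)
  have Wf_aff: "Wf z = Wf a + \<sigma> *\<^sub>R blinfun_apply (DG a \<xi>) (z - a)" for z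
    by (simp add: Wf_def lin_g_def algebra_simps blinfun.zero_right)
  have Wfa: "Wf a = yk + \<sigma> *\<^sub>R G a \<xi>"
    by (simp add: Wf_def lin_g_def blinfun.zero_right)
  have normWfa: "norm (Wf a) \<le> norm yk + \<sigma> * \<nu>g"
  proof -
    have "norm (Wf a) \<le> norm yk + norm (\<sigma> *\<^sub>R G a \<xi>)" unfolding Wfa by (rule norm_triangle_ineq)
    also have "norm (\<sigma> *\<^sub>R G a \<xi>) = \<sigma> * norm (G a \<xi>)" using sigma_pos by simp
    also have "\<sigma> * norm (G a \<xi>) \<le> \<sigma> * \<nu>g" using D2(2)[OF aU xiXi] sigma_pos by simp
    finally show ?thesis by simp
  qed
  have lower: "Phi b - Phi a \<ge> - M * norm d"
  proof -
    let ?P = "proj_polar K (Wf a)"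
    have lf: "lin_f F gradF a \<xi> b - lin_f F gradF a \<xi> a = inner (gradF a \<xi>) d"
      by (simp add: lin_f_def d_def)
    have sg: "q (Wf a) + 2 * inner ?P (Wf b - Wf a) \<le> q (Wf b)"
      unfolding q_def by (rule proj_subgrad)
    have "Wf b - Wf a = \<sigma> *\<^sub>R blinfun_apply (DG a \<xi>) d"
      using Wf_aff[of b] d_def by simp
    hence sg2: "q (Wf b) - q (Wf a) \<ge> 2 * \<sigma> * inner ?P (blinfun_apply (DG a \<xi>) d)"
      using sg by simp
    have "Phi b - Phi a = inner (gradF a \<xi>) d + c * (q (Wf b) - q (Wf a))"
      using Phi_eq[of b] Phi_eq[of a] lf by (simp add: algebra_simps)
    moreover have "c * (q (Wf b) - q (Wf a)) \<ge> inner ?P (blinfun_apply (DG a \<xi>) d)"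
    proof -
      have "c * (q (Wf b) - q (Wf a)) \<ge> c * (2 * \<sigma> * inner ?P (blinfun_apply (DG a \<xi>) d))"
        using sg2 cpos by (intro mult_left_mono) auto
      moreover have "c * (2 * \<sigma>) = 1" using sigma_pos c_def by simp
      ultimately show ?thesis by (simp add: mult.assoc[symmetric])
    qed
    moreover have "inner (gradF a \<xi>) d \<ge> - (\<kappa>f * norm d)"
    proof -
      have "\<bar>inner (gradF a \<xi>) d\<bar> \<le> norm (gradF a \<xi>) * norm d" by (rule Cauchy_Schwarz_ineq2)
      also have "\<dots> \<le> \<kappa>f * norm d" using D3(3)[OF aU xiXi] by (intro mult_right_mono) auto
      finally show ?thesis by linarith
    qed
    moreover have "inner ?P (blinfun_apply (DG a \<xi>) d) \<ge> - ((norm yk + \<sigma> * \<nu>g) * \<kappa>g * norm d)"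
    proof -
      have "\<bar>inner ?P (blinfun_apply (DG a \<xi>) d)\<bar> \<le> norm ?P * norm (blinfun_apply (DG a \<xi>) d)"
        by (rule Cauchy_Schwarz_ineq2)
      also have "\<dots> \<le> (norm yk + \<sigma> * \<nu>g) * (\<kappa>g * norm d)"
      proof (rule mult_mono)
        show "norm ?P \<le> norm yk + \<sigma> * \<nu>g" using proj_norm_le[of K "Wf a"] normWfa by linarith
        have "norm (blinfun_apply (DG a \<xi>) d) \<le> norm (DG a \<xi>) * norm d" by (rule norm_blinfun)
        also have "\<dots> \<le> \<kappa>g * norm d" using D3(4)[OF aU xiXi] by (intro mult_right_mono) auto
        finally show "norm (blinfun_apply (DG a \<xi>) d) \<le> \<kappa>g * norm d" .
        show "0 \<le> norm yk + \<sigma> * \<nu>g" using sigma_pos D2(1) by simp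
      qed simp
      finally show ?thesis by (simp add: mult.assoc)
    qed
    ultimately show ?thesis unfolding M_def by (simp add: algebra_simps)
  qed
  have step: "c * (2 - t) * (norm d)\<^sup>2 \<le> M * norm d" if t: "0 < t" "t \<le> 1" for t
  proof -
    define zt where "zt = (1 - t) *\<^sub>R b + t *\<^sub>R a"
    have ztX: "zt \<in> X" using X_cvx aX bX t unfolding zt_def convex_def by simp
    have zta: "zt - a = (1 - t) *\<^sub>R d" by (simp add: zt_def d_def algebra_simps)
    have lfz: "lin_f F gradF a \<xi> zt = (1 - t) * lin_f F gradF a \<xi> b + t * lin_f F gradF a \<xi> a"
    proof -
      have "lin_f F gradF a \<xi> zt = F a \<xi> + (1 - t) * inner (gradF a \<xi>) d"
        by (simp add: lin_f_def zta)
      thus ?thesis by (simp add: lin_f_def d_def algebra_simps)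
    qed
    have Wz: "Wf zt = (1 - t) *\<^sub>R Wf b + t *\<^sub>R Wf a"
    proof -
      have "Wf zt = Wf a + ((1 - t) * \<sigma>) *\<^sub>R blinfun_apply (DG a \<xi>) d"
        using Wf_aff[of zt] zta by (simp add: blinfun.scaleR_right)
      moreover have "Wf b = Wf a + \<sigma> *\<^sub>R blinfun_apply (DG a \<xi>) d"
        using Wf_aff[of b] d_def by simp
      ultimately show ?thesis by (simp add: algebra_simps)
    qed
    have qz: "q (Wf zt) \<le> (1 - t) * q (Wf b) + t * q (Wf a)"
      unfolding Wz q_def using t by (intro proj_convex) auto
    have Phiz: "Phi zt \<le> (1 - t) * Phi b + t * Phi a"
    proof -
      have "c * q (Wf zt) \<le> c * ((1 - t) * q (Wf b) + t * q (Wf a))"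
        using qz cpos by (intro mult_left_mono) auto
      thus ?thesis unfolding Phi_eq lfz by (simp add: algebra_simps)
    qed
    have nz: "(norm (zt - a))\<^sup>2 = (1 - t)\<^sup>2 * (norm d)\<^sup>2"
      using t by (simp add: zta power_mult_distrib)
    have "Phi b + c * (norm d)\<^sup>2 \<le> (1 - t) * Phi b + t * Phi a + c * ((1 - t)\<^sup>2 * (norm d)\<^sup>2)"
      using min[OF ztX] Phiz nz by simp
    hence "t * (Phi b - Phi a) + t * (c * (2 - t) * (norm d)\<^sup>2) \<le> 0"
      by (simp add: algebra_simps power2_eq_square)
    hence "t * ((Phi b - Phi a) + c * (2 - t) * (norm d)\<^sup>2) \<le> 0"
      by (simp add: algebra_simps)
    hence "(Phi b - Phi a) + c * (2 - t) * (norm d)\<^sup>2 \<le> 0"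
      using t by (simp add: mult_le_0_iff)
    thus ?thesis using lower by linarith
  qed
  have "norm d \<le> \<sigma> * M"
  proof (rule ccontr)
    assume "\<not> norm d \<le> \<sigma> * M"
    hence gt: "norm d > \<sigma> * M" by simp
    have sM: "\<sigma> * M \<ge> 0" using sigma_pos Mpos by simp
    define n where "n = norm d"
    have npos: "n > 0" using gt sM n_def by linarith
    define t where "t = (n - \<sigma> * M) / n"
    have t0: "0 < t" using gt npos n_def t_def by simp
    have t1: "t \<le> 1" using sM npos t_def by (simp add: divide_le_eq_1)
    have "c * (2 - t) * n\<^sup>2 \<le> M * n" using step[OF t0 t1] n_def by simp
    moreover have "(2 - t) * n = n + \<sigma> * M" using npos t_def by (simp add: field_simps)
    ultimately have "c * (n + \<sigma> * M) * n \<le> M * n" by (metis power2_eq_square mult.assoc)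
    hence "c * (n + \<sigma> * M) \<le> M" using npos by simp
    hence "(n + \<sigma> * M) \<le> 2 * \<sigma> * M" using sigma_pos c_def by (simp add: field_simps)
    thus False using gt n_def by linarith
  qed
  thus "norm (x (Suc k) - x k) \<le> \<sigma> * ((\<kappa>f + \<nu>g * \<kappa>g * \<sigma>) + \<kappa>g * norm (y k))"
    by (simp add: d_def a_def b_def M_def yk_def)
qed

end
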